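(* Let $n\in\mathbb{N}$ and let $A$ be an $n\times n$ acyclic real symmetric matrix with an eigenvalue $\lambda$ of multiplicity one. If $u\in[n]$ is an index with $\phi(A-u,\lambda)\neq 0$, then there exist a unit $\lambda$-eigenvector $\boldsymbol{\beta}$ of $A$ and a $\lambda$-eigenvector $\boldsymbol{\gamma}$ of $A$ such that for every $v\in[n]$ \[ \boldsymbol{\beta}(v)=\begin{cases} \dfrac{W(P_{u,v})\,\phi(A-P_{u,v},\lambda)}{\sqrt{\phi(A-u,\lambda)\,\phi'(A,\lambda)}} & \text{if there is a path from } u \text{ to } v \text{ in } G(A),\\ 0 & \text{otherwise},\end{cases} \qquad\text{and}\qquad |\boldsymbol{\gamma}(v)|=\sqrt{|\phi(A-v,\lambda)|}. \]
   Context: $[n]=\{1,\ldots,n\}$. For a real symmetric $n\times n$ matrix $A$, its graph $G(A)$ has vertex set $[n]$, with $u\neq v$ adjacent iff $A_{uv}\neq 0$; each edge $uv$ has weight $w(uv)=A_{uv}$ and each vertex $v$ has weight $w(v)=A_{vv}$. $A$ is called acyclic if $G(A)$ is a forest. When $u,v$ lie in the same component, $P_{u,v}$ denotes the unique path between them (a single vertex if $u=v$), and $W(P_{u,v})$ is the product of the weights of its edges (equal to $1$ if $u=v$). For an index set $U$, $A-U$ is the matrix obtained from $A$ by deleting the rows and columns indexed by $U$. $\phi(B,x)=\det(x\mathbb{I}-B)$ is the characteristic polynomial (with $\phi$ of the empty matrix equal to $1$), and $\phi'(A,\lambda)$ denotes the derivative of $x\mapsto\phi(A,x)$ evaluated at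 $x=\lambda$. *)

theory Defs
  imports "Jordan_Normal_Form.Char_Poly" "Jordan_Normal_Form.DL_Submatrix"
begin

text \<open>Indices are 0-based: [n] is rendered as {0..<n}.\<close>

definition adj :: "real mat \<Rightarrow> nat \<Rightarrow> nat \<Rightarrow> bool" where
  "adj A u v \<longleftrightarrow> u \<noteq> v \<and> A $$ (u, v) \<noteq> 0"

definition is_path :: "real mat \<Rightarrow> nat list \<Rightarrow> bool" where
  "is_path A p \<longleftrightarrow> p \<noteq> [] \<and> distinct p \<and> set p \<subseteq> {..<dim_row A} \<and>
     (\<forall>i < length p - 1. adj A (p ! i) (p ! Suc i))"

definition has_path :: "real mat \<Rightarrow> nat \<Rightarrow> nat \<Rightarrow> bool" where
  "has_path A u v \<longleftrightarrow> (\<exists>p. is_path A p \<and> hd p = u \<and> last p = v)"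

definition acyclic_mat :: "real mat \<Rightarrow> bool" where
  "acyclic_mat A \<longleftrightarrow> \<not> (\<exists>p. is_path A p \<and> length p \<ge> 3 \<and> adj A (last p) (hd p))"

text \<open>The (unique, in a forest) path P_{u,v}.\<close>
definition upath :: "real mat \<Rightarrow> nat \<Rightarrow> nat \<Rightarrow> nat list" where
  "upath A u v = (THE p. is_path A p \<and> hd p = u \<and> last p = v)"

definition path_weight :: "real mat \<Rightarrow> nat list \<Rightarrow> real" where
  "path_weight A p = (\<Prod>i < length p - 1. A $$ (p ! i, p ! Suc i))"

definition del_mat :: "real mat \<Rightarrow> nat set \<Rightarrow> real mat" where
  "del_mat A U = submatrix A (- U) (- U)"

text \<open>phi(B, x) = det(x I - B); phi of the empty matrix is 1.\<close>
definition phi :: "real mat \<Rightarrow> real \<Rightarrow> real" where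
  "phi B x = poly (char_poly B) x"

definition phi' :: "real mat \<Rightarrow> real \<Rightarrow> real" where
  "phi' B x = poly (pderiv (char_poly B)) x"

end

theory Submission
  imports Defs "HOL-Combinatorics.Cycles"
begin



definition detS :: "(nat \<Rightarrow> nat \<Rightarrow> 'a::comm_ring_1) \<Rightarrow> nat set \<Rightarrow> 'a" where
  "detS g S = (\<Sum>p\<in>{p. p permutes S}. of_int (sign p) * (\<Prod>i\<in>S. g i (p i)))"

lemma detS_cong:
  assumes "\<And>i j. i \<in> S \<Longrightarrow> j \<in> S \<Longrightarrow> g i j = g' i j"
  shows "detS g S = detS g' S"
  unfolding detS_def
proof (rule sum.cong[OF refl])
  fix p assume p: "p \<in> {p. p permutes S}"
  have "(\<Prod>i\<in>S. g i (p i)) = (\<Prod>i\<in>S. g' i (p i))"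
    using assms permutes_in_image[of p S] p by (intro prod.cong) auto
  then show "of_int (sign p) * (\<Prod>i\<in>S. g i (p i)) = of_int (sign p) * (\<Prod>i\<in>S. g' i (p i))" by simp
qed

lemma detS_reindex:
  fixes m :: nat
  assumes h: "bij_betw h {0..<m} S"
  shows "(\<Sum>p\<in>{p. p permutes {0..<m}}. of_int (sign p) * (\<Prod>i\<in>{0..<m}. g (h i) (h (p i)))) = detS g S"
proof -
  let ?P = "{p. p permutes {0..<m}}" and ?Q = "{q. q permutes S}"
  let ?F = "map_permutation {0..<m} h" and ?G = "map_permutation S (inv_into {0..<m} h)"
  have inj: "inj_on h {0..<m}" using h by (auto simp: bij_betw_def)
  have finS: "finite S" using bij_betw_finite[OF h] by simp
  have bij: "bij_betw ?F ?P ?Q"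
  proof (rule bij_betw_byWitness[where f' = ?G])
    have hi: "\<And>x. x \<in> {0..<m} \<Longrightarrow> inv_into {0..<m} h (h x) = x"
      using inv_into_f_f[OF inj] by blast
    show "\<forall>p\<in>?P. ?G (?F p) = p"
    proof
      fix p assume "p \<in> ?P"
      then have p: "p permutes {0..<m}" by simp
      show "?G (?F p) = p" by (rule map_permutation_compose_inv[OF h p hi])
    qed
    have surj: "h ` {0..<m} = S" using h by (simp add: bij_betw_def)
    have ih: "\<And>x. x \<in> S \<Longrightarrow> h (inv_into {0..<m} h x) = x"
      using f_inv_into_f surj by metis
    show "\<forall>q\<in>?Q. ?F (?G q) = q"
    proof
      fix q assume "q \<in> ?Q"
      then have q: "q permutes S" by simp
      show "?F (?G q) = q" by (rule map_permutation_compose_inv[OF bij_betw_inv_into[OF h] q ih])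
    qed
    show "?F ` ?P \<subseteq> ?Q" using map_permutation_permutes[OF h] by blast
    show "?G ` ?Q \<subseteq> ?P" using map_permutation_permutes[OF bij_betw_inv_into[OF h]] by blast
  qed
  have "detS g S = (\<Sum>p\<in>?P. of_int (sign (?F p)) * (\<Prod>k\<in>S. g k (?F p k)))"
    unfolding detS_def by (rule sum.reindex_bij_betw[OF bij, symmetric])
  also have "\<dots> = (\<Sum>p\<in>?P. of_int (sign p) * (\<Prod>i\<in>{0..<m}. g (h i) (h (p i))))"
  proof (rule sum.cong[OF refl])
    fix p assume p: "p \<in> ?P"
    have "sign (?F p) = sign p" using sign_map_permutation[OF inj _ finite_atLeastLessThan] p by blast
    moreover have "(\<Prod>k\<in>S. g k (?F p k)) = (\<Prod>i\<in>{0..<m}. g (h i) (?F p (h i)))"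
      by (rule prod.reindex_bij_betw[OF h, symmetric])
    moreover have "\<And>i. i \<in> {0..<m} \<Longrightarrow> ?F p (h i) = h (p i)"
      using map_permutation_apply[OF inj] by blast
    ultimately show "of_int (sign (?F p)) * (\<Prod>k\<in>S. g k (?F p k)) = of_int (sign p) * (\<Prod>i\<in>{0..<m}. g (h i) (h (p i)))"
      by simp
  qed
  finally show ?thesis by simp
qed


lemma det_via_detS:
  assumes C: "C \<in> carrier_mat m m" and h: "bij_betw h {0..<m} S"
    and e: "\<And>i j. i < m \<Longrightarrow> j < m \<Longrightarrow> C $$ (i,j) = G (h i) (h j)"
  shows "det C = detS G S"
proof -
  have "det C = (\<Sum>p\<in>{p. p permutes {0..<m}}. of_int (sign p) * (\<Prod>i\<in>{0..<m}. G (h i) (h (p i))))"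
    unfolding det_def'[OF C]
  proof (rule sum.cong[OF refl])
    fix p assume p: "p \<in> {p. p permutes {0..<m}}"
    have "(\<Prod>i\<in>{0..<m}. C $$ (i, p i)) = (\<Prod>i\<in>{0..<m}. G (h i) (h (p i)))"
      using e permutes_in_image[of p "{0..<m}"] p by (intro prod.cong) auto
    then show "signof p * (\<Prod>i = 0..<m. C $$ (i, p i)) = of_int (sign p) * (\<Prod>i\<in>{0..<m}. G (h i) (h (p i)))"
      by simp
  qed
  then show ?thesis using detS_reindex[OF h] by simp
qed

lemma poly_detS: "poly (detS G S) x = detS (\<lambda>i j. poly (G i j) x) S"
  unfolding detS_def by (simp add: poly_sum poly_prod)

lemma pick_bij:
  assumes "finite U"
  shows "bij_betw (pick (-U)) {0..<card {i. i < n \<and> i \<in> -U}} ({0..<n} - U)"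
proof -
  let ?m = "card {i. i < n \<and> i \<in> -U}"
  have inf: "infinite (-U)" using assms by (simp add: Compl_eq_Diff_UNIV infinite_UNIV_nat)
  have inj: "inj_on (pick (-U)) {0..<?m}"
    by (rule inj_onI) (metis inf nat_neq_iff pick_mono_inf)
  have sub: "pick (-U) ` {0..<?m} \<subseteq> {0..<n} - U"
    using pick_in_set_inf[OF inf] pick_le by auto
  have eqset: "{i. i < n \<and> i \<in> -U} = {0..<n} - U" by auto
  have "card (pick (-U) ` {0..<?m}) = card ({0..<n} - U)"
    using card_image[OF inj] eqset by simp
  then have "pick (-U) ` {0..<?m} = {0..<n} - U"
    using sub by (intro card_subset_eq) auto
  then show ?thesis using inj by (auto simp: bij_betw_def)
qed

lemma phi_detS:
  assumes A: "A \<in> carrier_mat n n" and U: "finite U"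
  shows "phi (del_mat A U) x = detS (\<lambda>i j. (if i = j then x else 0) - A $$ (i,j)) ({0..<n} - U)"
proof -
  let ?m = "card {i. i < n \<and> i \<in> -U}"
  let ?B = "submatrix A (-U) (-U)"
  have dimA: "dim_row A = n" "dim_col A = n" using A by auto
  have Bc: "?B \<in> carrier_mat ?m ?m"
    by (rule carrier_matI) (simp only: dim_submatrix dimA)+
  have inf: "infinite (-U)" using U by (simp add: Compl_eq_Diff_UNIV infinite_UNIV_nat)
  have "char_poly ?B = detS (\<lambda>i j. (if i = j then [:0,1:] else 0) + [: - A $$ (i,j) :]) ({0..<n} - U)"
    unfolding char_poly_def
  proof (rule det_via_detS[OF _ pick_bij[OF U]])
    show "char_poly_matrix ?B \<in> carrier_mat ?m ?m" using Bc by simp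
    fix i j assume ij: "i < ?m" "j < ?m"
    have e: "pick (-U) i = pick (-U) j \<longleftrightarrow> i = j"
      using pick_eq_iff_inf[OF inf] by metis
    show "char_poly_matrix ?B $$ (i, j) = (if pick (-U) i = pick (-U) j then [:0, 1:] else 0) + [:- A $$ (pick (-U) i, pick (-U) j):]"
    proof -
      have sb: "?B $$ (i,j) = A $$ (pick (-U) i, pick (-U) j)"
        using ij dimA by (intro submatrix_index) simp_all
      have "char_poly_matrix ?B $$ (i, j) = (if i = j then [:0, 1:] else 0) + [:- ?B $$ (i,j):]"
        using ij Bc unfolding char_poly_matrix_def carrier_mat_def by simp
      then show ?thesis using sb e by simp
    qed
  qed
  then have "phi (del_mat A U) x = detS (\<lambda>i j. poly ((if i = j then [:0,1:] else 0) + [: - A $$ (i,j) :]) x) ({0..<n} - U)"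
    unfolding phi_def del_mat_def by (simp add: poly_detS)
  also have "\<dots> = detS (\<lambda>i j. (if i = j then x else 0) - A $$ (i,j)) ({0..<n} - U)"
    by (rule detS_cong) auto
  finally show ?thesis .
qed

lemma insert_index_bij:
  assumes "i < n"
  shows "bij_betw (\<lambda>k. if k < i then k else Suc k) {0..<n-1} ({0..<n} - {i})"
proof -
  have "(\<lambda>k. if k < i then k else Suc k) ` {0..<n-1} = {0..<n} - {i}"
  proof
    show "{0..<n} - {i} \<subseteq> (\<lambda>k. if k < i then k else Suc k) ` {0..<n-1}"
    proof
      fix y assume y: "y \<in> {0..<n} - {i}"
      show "y \<in> (\<lambda>k. if k < i then k else Suc k) ` {0..<n-1}"
      proof (cases "y < i")
        case True
        then show ?thesis using y assms by (intro image_eqI[where x=y]) auto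
      next
        case False
        then show ?thesis using y assms by (intro image_eqI[where x="y - 1"]) auto
      qed
    qed
  qed (use assms in auto)
  moreover have "inj_on (\<lambda>k. if k < i then k else Suc k) {0..<n-1}"
    by (auto simp: inj_on_def split: if_splits)
  ultimately show ?thesis by (auto simp: bij_betw_def)
qed

lemma phi_delete:
  assumes A: "A \<in> carrier_mat n n" and i: "i < n"
  shows "poly (char_poly (mat_delete A i i)) x = detS (\<lambda>i j. (if i = j then x else 0) - A $$ (i,j)) ({0..<n} - {i})"
proof -
  have D: "mat_delete A i i \<in> carrier_mat (n-1) (n-1)" using A by (auto simp: mat_delete_def)
  have "char_poly (mat_delete A i i) = detS (\<lambda>i j. (if i = j then [:0,1:] else 0) + [: - A $$ (i,j) :]) ({0..<n} - {i})"
    unfolding char_poly_def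
  proof (rule det_via_detS[OF _ insert_index_bij[OF i]])
    show "char_poly_matrix (mat_delete A i i) \<in> carrier_mat (n-1) (n-1)" using D by simp
    fix a b assume ab: "a < n - 1" "b < n - 1"
    show "char_poly_matrix (mat_delete A i i) $$ (a, b) =
      (if (if a < i then a else Suc a) = (if b < i then b else Suc b) then [:0, 1:] else 0) + [:- A $$ (if a < i then a else Suc a, if b < i then b else Suc b):]"
      using ab D A by (auto simp: char_poly_matrix_def mat_delete_def)
  qed
  then show ?thesis by (simp add: poly_detS, intro detS_cong) auto
qed




lemma permutes_fix_iff:
  assumes "w \<in> S"
  shows "{p. p permutes S \<and> p w = w} = {p. p permutes (S - {w})}"
proof -
  have 1: "p permutes (S - {w})" if "p permutes S" "p w = w" for p
    by (rule permutes_superset[OF that(1)]) (use that(2) in auto)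
  have 2: "p permutes S \<and> p w = w" if p: "p permutes (S - {w})" for p
    using permutes_subset[OF p] permutes_not_in[OF p] by blast
  show ?thesis
  proof (rule Set.set_eqI)
    fix p
    show "p \<in> {p. p permutes S \<and> p w = w} \<longleftrightarrow> p \<in> {p. p permutes (S - {w})}"
      using 1[of p] 2[of p] by (simp only: mem_Collect_eq) blast
  qed
qed

lemma detS_col:
  assumes fin: "finite S" and u: "u \<in> S" and z: "\<And>i. i \<in> S \<Longrightarrow> i \<noteq> u \<Longrightarrow> g i u = 0"
  shows "detS g S = g u u * detS g (S - {u})"
proof -
  let ?F = "\<lambda>p. of_int (sign p) * (\<Prod>i\<in>S. g i (p i))"
  have "detS g S = sum ?F {p. p permutes S \<and> p u = u}"
    unfolding detS_def
  proof (rule sum.mono_neutral_right)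
    show "finite {p. p permutes S}" using finite_permutations[OF fin] .
    show "{p. p permutes S \<and> p u = u} \<subseteq> {p. p permutes S}" by blast
    show "\<forall>p\<in>{p. p permutes S} - {p. p permutes S \<and> p u = u}. ?F p = 0"
    proof
      fix p assume "p \<in> {p. p permutes S} - {p. p permutes S \<and> p u = u}"
      then have p: "p permutes S" and pu: "p u \<noteq> u" by auto
      have "u \<in> p ` S" using permutes_image[OF p] u by simp
      then obtain i where i: "i \<in> S" "p i = u" by blast
      have "i \<noteq> u" using i pu by auto
      then have "g i (p i) = 0" using z i by simp
      then have "(\<Prod>i\<in>S. g i (p i)) = 0" using i fin by (intro prod_zero) auto
      then show "?F p = 0" by simp
    qed
  qed
  also have "\<dots> = sum ?F {p. p permutes (S - {u})}" using permutes_fix_iff[OF u] by simp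
  also have "\<dots> = (\<Sum>p\<in>{p. p permutes (S - {u})}. g u u * (of_int (sign p) * (\<Prod>i\<in>S - {u}. g i (p i))))"
  proof (rule sum.cong[OF refl])
    fix p assume "p \<in> {p. p permutes (S - {u})}"
    then have pu: "p u = u" using permutes_not_in by fastforce
    have "(\<Prod>i\<in>S. g i (p i)) = g u (p u) * (\<Prod>i\<in>S - {u}. g i (p i))"
      by (rule prod.remove[OF fin u])
    then show "?F p = g u u * (of_int (sign p) * (\<Prod>i\<in>S - {u}. g i (p i)))" using pu by simp
  qed
  also have "\<dots> = g u u * detS g (S - {u})" unfolding detS_def by (simp add: sum_distrib_left)
  finally show ?thesis .
qed

locale forest =
  fixes A :: "real mat" and n :: nat
  assumes carr: "A \<in> carrier_mat n n"
    and symm: "\<forall>i<n. \<forall>j<n. A $$ (i, j) = A $$ (j, i)"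
    and acyc: "acyclic_mat A"
begin

definition N :: "real \<Rightarrow> nat \<Rightarrow> nat \<Rightarrow> real" where
  "N x i j = (if i = j then x else 0) - A $$ (i,j)"

lemma dimA: "dim_row A = n" "dim_col A = n" using carr by auto

lemma no_long_cycle:
  assumes S: "S \<subseteq> {0..<n}" and p: "p permutes S"
    and nz: "\<And>i. i \<in> S \<Longrightarrow> p i \<noteq> i \<Longrightarrow> A $$ (i, p i) \<noteq> 0"
  shows "p (p w) = w"
proof (rule ccontr)
  assume np: "p (p w) \<noteq> w"
  have finS: "finite S" using S finite_subset by blast
  have w: "w \<in> S"
  proof (rule ccontr)
    assume "w \<notin> S"
    then have "p w = w" using permutes_not_in[OF p] by blast
    then show False using np by simp
  qed
  have pw: "p w \<noteq> w" using np by auto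
  have perm: "permutation p" using finS p permutation_permutes by blast
  obtain N0 where N0: "(p ^^ N0) = id" "N0 > 0" using permutation_is_nilpotent[OF perm] by blast
  define k where "k = (LEAST k. 0 < k \<and> (p ^^ k) w = w)"
  have k: "0 < k \<and> (p ^^ k) w = w" unfolding k_def
    by (rule LeastI[of _ N0]) (use N0 in auto)
  have kmin: "(p ^^ j) w \<noteq> w" if "0 < j" "j < k" for j
    using not_less_Least[of j "\<lambda>k. 0 < k \<and> (p ^^ k) w = w"] that unfolding k_def by blast
  have injp: "\<And>i. inj (p ^^ i)" using permutes_inj[OF p] by (simp add: inj_fn)
  have dist: "(p ^^ i) w \<noteq> (p ^^ j) w" if ij: "i < j" "j < k" for i j
  proof
    assume eq: "(p ^^ i) w = (p ^^ j) w"
    have "p ^^ j = p ^^ i \<circ> p ^^ (j - i)"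
      using funpow_add[of i "j - i" p] ij by simp
    then have "(p ^^ j) w = (p ^^ i) ((p ^^ (j - i)) w)" by simp
    then have "(p ^^ i) ((p ^^ (j - i)) w) = (p ^^ i) w" using eq by simp
    then have "(p ^^ (j - i)) w = w" using injp[of i] by (simp add: inj_eq)
    then show False using kmin[of "j - i"] ij by simp
  qed
  have "k \<noteq> 1" using k pw by auto
  moreover have "k \<noteq> 2" using k np by (auto simp: numeral_2_eq_2)
  ultimately have k3: "3 \<le> k" using k by linarith
  have inS: "\<And>j. (p ^^ j) w \<in> S" using permutes_in_funpow_image[OF p w] .
  have step: "\<And>j. p ((p ^^ j) w) = (p ^^ Suc j) w" by simp
  have nfix: "p ((p ^^ j) w) \<noteq> (p ^^ j) w" if j: "j < k" for j
  proof (cases "Suc j < k")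
    case True
    then show ?thesis using dist[of j "Suc j"] by simp
  next
    case False
    then have "Suc j = k" using j by simp
    then have "(p ^^ Suc j) w = w" using k by simp
    then have "p ((p ^^ j) w) = w" by simp
    moreover have "(p ^^ j) w \<noteq> w" using kmin[of j] k3 \<open>Suc j = k\<close> by simp
    ultimately show ?thesis by simp
  qed
  define L where "L = map (\<lambda>j. (p ^^ j) w) [0..<k]"
  have lenL: "length L = k" unfolding L_def by simp
  have nthL: "\<And>j. j < k \<Longrightarrow> L ! j = (p ^^ j) w" unfolding L_def by simp
  have adjL: "adj A ((p ^^ j) w) (p ((p ^^ j) w))" if "j < k" for j
    unfolding adj_def using nfix[OF that] nz[OF inS[of j]] by auto
  have "is_path A L"
    unfolding is_path_def
  proof (intro conjI allI impI)
    show "L \<noteq> []" using lenL k by auto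
    show "distinct L" unfolding L_def distinct_map
    proof
      show "inj_on (\<lambda>j. (p ^^ j) w) (set [0..<k])"
      proof (rule inj_onI)
        fix i j assume "i \<in> set [0..<k]" "j \<in> set [0..<k]" "(p ^^ i) w = (p ^^ j) w"
        then show "i = j" using dist[of i j] dist[of j i] by (cases i j rule: linorder_cases) auto
      qed
    qed simp
    show "set L \<subseteq> {..<dim_row A}"
    proof
      fix y assume "y \<in> set L"
      then obtain j where "y = (p ^^ j) w" unfolding L_def by auto
      then have "y \<in> S" using inS by simp
      then show "y \<in> {..<dim_row A}" using S dimA by auto
    qed
    fix i assume "i < length L - 1"
    then have i: "i < k" "Suc i < k" using lenL by auto
    show "adj A (L ! i) (L ! Suc i)" using nthL[OF i(1)] nthL[OF i(2)] adjL[OF i(1)] by simp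
  qed
  moreover have "3 \<le> length L" using lenL k3 by simp
  moreover have "adj A (last L) (hd L)"
  proof -
    have Lne: "L \<noteq> []" using lenL k by auto
    have "last L = (p ^^ (k - 1)) w" using lenL k nthL[of "k - 1"] last_conv_nth[OF Lne] by simp
    moreover have "hd L = w" using lenL k nthL[of 0] hd_conv_nth[OF Lne] by simp
    moreover have "p ((p ^^ (k - 1)) w) = w"
    proof -
      have "Suc (k - 1) = k" using k by simp
      then have "(p ^^ Suc (k - 1)) w = w" using k by simp
      then show ?thesis by simp
    qed
    ultimately show ?thesis using adjL[of "k - 1"] k by simp
  qed
  ultimately show False using acyc unfolding acyclic_mat_def by blast
qed

end



context forest begin

lemma N_offdiag: "i \<noteq> j \<Longrightarrow> N x i j = - A $$ (i,j)" unfolding N_def by simp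
lemma N_diag: "N x i i = x - A $$ (i,i)" unfolding N_def by simp

lemma zero_term:
  assumes S: "S \<subseteq> {0..<n}" and p: "p permutes S" and np: "p (p w) \<noteq> w"
  shows "(\<Prod>i\<in>S. N x i (p i)) = 0"
proof (rule ccontr)
  assume nz: "(\<Prod>i\<in>S. N x i (p i)) \<noteq> 0"
  have finS: "finite S" using S finite_subset by blast
  have "A $$ (i, p i) \<noteq> 0" if "i \<in> S" "p i \<noteq> i" for i
  proof
    assume "A $$ (i, p i) = 0"
    then have "N x i (p i) = 0" using that N_offdiag[of i "p i" x] by simp
    then have "(\<Prod>i\<in>S. N x i (p i)) = 0" using that finS by (intro prod_zero) auto
    then show False using nz by simp
  qed
  then have "p (p w) = w" using no_long_cycle[OF S p] by blast
  then show False using np by simp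
qed

lemma schwenk:
  assumes S: "S \<subseteq> {0..<n}" and w: "w \<in> S"
  shows "detS (N x) S = (x - A $$ (w,w)) * detS (N x) (S - {w})
     - (\<Sum>z\<in>S - {w}. A $$ (w,z) * A $$ (z,w) * detS (N x) (S - {w} - {z}))"
proof -
  have finS: "finite S" using S finite_subset by blast
  let ?F = "\<lambda>p. of_int (sign p) * (\<Prod>i\<in>S. N x i (p i)) :: real"
  let ?P = "\<lambda>z. {p \<in> {p. p permutes S}. p w = z}"
  have "detS (N x) S = (\<Sum>z\<in>S. sum ?F (?P z))"
    unfolding detS_def
  proof (rule sum.group[symmetric])
    show "finite {p. p permutes S}" using finite_permutations[OF finS] .
    show "finite S" by fact
    show "(\<lambda>p. p w) ` {p. p permutes S} \<subseteq> S" using permutes_in_image w by fastforce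
  qed
  also have "\<dots> = sum ?F (?P w) + (\<Sum>z\<in>S - {w}. sum ?F (?P z))"
    by (rule sum.remove[OF finS w])
  also have "sum ?F (?P w) = (x - A $$ (w,w)) * detS (N x) (S - {w})"
  proof -
    have "?P w = {p. p permutes (S - {w})}" using permutes_fix_iff[OF w] by simp
    then have "sum ?F (?P w) = sum ?F {p. p permutes (S - {w})}" by simp
    also have "\<dots> = (\<Sum>p\<in>{p. p permutes (S - {w})}. (x - A $$ (w,w)) * (of_int (sign p) * (\<Prod>i\<in>S - {w}. N x i (p i))))"
    proof (rule sum.cong[OF refl])
      fix p assume "p \<in> {p. p permutes (S - {w})}"
      then have pw: "p w = w" using permutes_not_in by fastforce
      have "(\<Prod>i\<in>S. N x i (p i)) = N x w (p w) * (\<Prod>i\<in>S - {w}. N x i (p i))"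
        by (rule prod.remove[OF finS w])
      then show "?F p = (x - A $$ (w,w)) * (of_int (sign p) * (\<Prod>i\<in>S - {w}. N x i (p i)))"
        using pw N_diag[of x w] by simp
    qed
    also have "\<dots> = (x - A $$ (w,w)) * detS (N x) (S - {w})"
      unfolding detS_def by (simp add: sum_distrib_left)
    finally show ?thesis .
  qed
  also have "(\<Sum>z\<in>S - {w}. sum ?F (?P z)) = (\<Sum>z\<in>S - {w}. - (A $$ (w,z) * A $$ (z,w) * detS (N x) (S - {w} - {z})))"
  proof (rule sum.cong[OF refl])
    fix z assume z: "z \<in> S - {w}"
    let ?t = "Transposition.transpose w z"
    let ?Q = "{p \<in> {p. p permutes S}. p w = z \<and> p z = w}"
    let ?R = "{q. q permutes (S - {w} - {z})}"
    have wz: "w \<noteq> z" using z by simp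
    have zS: "z \<in> S" using z by simp
    have "sum ?F (?P z) = sum ?F ?Q"
    proof (rule sum.mono_neutral_right)
      show "finite (?P z)" using finite_permutations[OF finS] by simp
      show "?Q \<subseteq> ?P z" by blast
      show "\<forall>p\<in>?P z - ?Q. ?F p = 0"
      proof
        fix p assume "p \<in> ?P z - ?Q"
        then have p: "p permutes S" "p w = z" "p z \<noteq> w" by auto
        have "p (p w) \<noteq> w" using p by simp
        then show "?F p = 0" using zero_term[OF S p(1)] by simp
      qed
    qed
    also have "\<dots> = sum (\<lambda>q. ?F (?t \<circ> q)) ?R"
    proof (rule sum.reindex_bij_witness[where i = "\<lambda>q. ?t \<circ> q" and j = "\<lambda>p. ?t \<circ> p"])
      fix p assume "p \<in> ?Q"
      then have p: "p permutes S" "p w = z" "p z = w" by auto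
      show "?t \<circ> (?t \<circ> p) = p" by (simp add: o_assoc)
      have tp: "(?t \<circ> p) permutes S" using permutes_compose[OF p(1) permutes_swap_id[OF w zS]] .
      have "(?t \<circ> p) w = w" "(?t \<circ> p) z = z" using p(2,3) by auto
      then show "?t \<circ> p \<in> ?R" using tp by (auto intro: permutes_superset[OF tp])
      show "?F (?t \<circ> (?t \<circ> p)) = ?F p" by (simp add: o_assoc)
    next
      fix q assume "q \<in> ?R"
      then have q: "q permutes (S - {w} - {z})" by simp
      show "?t \<circ> (?t \<circ> q) = q" by (simp add: o_assoc)
      have qS: "q permutes S" using permutes_subset[OF q] by blast
      have qw: "q w = w" "q z = z" using permutes_not_in[OF q] by auto
      have "(?t \<circ> q) permutes S" using permutes_compose[OF qS permutes_swap_id[OF w zS]] .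
      moreover have "(?t \<circ> q) w = z" "(?t \<circ> q) z = w" using qw by auto
      ultimately show "?t \<circ> q \<in> ?Q" by simp
    qed
    also have "\<dots> = sum (\<lambda>q. - (A $$ (w,z) * A $$ (z,w)) * (of_int (sign q) * (\<Prod>i\<in>S - {w} - {z}. N x i (q i)))) ?R"
    proof (rule sum.cong[OF refl])
      fix q assume "q \<in> ?R"
      then have q: "q permutes (S - {w} - {z})" by simp
      have qw: "q w = w" "q z = z" using permutes_not_in[OF q] by auto
      have finR: "finite (S - {w} - {z})" using finS by simp
      have sgn: "sign (?t \<circ> q) = - sign q"
      proof -
        have "sign (?t \<circ> q) = sign ?t * sign q"
          by (rule sign_compose[OF permutation_swap_id permutes_imp_permutation[OF finR q]])
        then show ?thesis using wz by (simp add: sign_swap_id)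
      qed
      have zS': "z \<in> S - {w}" using z by simp
      have "(\<Prod>i\<in>S. N x i ((?t \<circ> q) i)) = N x w ((?t \<circ> q) w) * (\<Prod>i\<in>S - {w}. N x i ((?t \<circ> q) i))"
        by (rule prod.remove[OF finS w])
      also have "(\<Prod>i\<in>S - {w}. N x i ((?t \<circ> q) i)) = N x z ((?t \<circ> q) z) * (\<Prod>i\<in>S - {w} - {z}. N x i ((?t \<circ> q) i))"
        by (rule prod.remove) (use finS zS' in auto)
      also have "(\<Prod>i\<in>S - {w} - {z}. N x i ((?t \<circ> q) i)) = (\<Prod>i\<in>S - {w} - {z}. N x i (q i))"
      proof (rule prod.cong[OF refl])
        fix i assume "i \<in> S - {w} - {z}"
        then have "q i \<in> S - {w} - {z}" using permutes_in_image[OF q] by simp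
        then show "N x i ((?t \<circ> q) i) = N x i (q i)" by auto
      qed
      finally have "(\<Prod>i\<in>S. N x i ((?t \<circ> q) i)) = N x w z * (N x z w * (\<Prod>i\<in>S - {w} - {z}. N x i (q i)))"
        using qw by simp
      also have "\<dots> = A $$ (w,z) * A $$ (z,w) * (\<Prod>i\<in>S - {w} - {z}. N x i (q i))"
        using N_offdiag[OF wz] N_offdiag[of z w] wz by simp
      finally show "?F (?t \<circ> q) = - (A $$ (w,z) * A $$ (z,w)) * (of_int (sign q) * (\<Prod>i\<in>S - {w} - {z}. N x i (q i)))"
        using sgn by simp
    qed
    also have "\<dots> = - (A $$ (w,z) * A $$ (z,w) * detS (N x) (S - {w} - {z}))"
      unfolding detS_def by (simp add: sum_distrib_left sum_negf)
    finally show "sum ?F (?P z) = - (A $$ (w,z) * A $$ (z,w) * detS (N x) (S - {w} - {z}))" .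
  qed
  finally show ?thesis by (simp add: sum_negf)
qed

end



context forest begin

lemma is_path_alt:
  "is_path A p \<longleftrightarrow> p \<noteq> [] \<and> distinct p \<and> set p \<subseteq> {..<n} \<and> successively (adj A) p"
proof -
  have "(\<forall>i < length p - 1. adj A (p ! i) (p ! Suc i)) \<longleftrightarrow> (\<forall>i. Suc i < length p \<longrightarrow> adj A (p ! i) (p ! Suc i))"
    by (simp add: less_diff_conv)
  then show ?thesis unfolding is_path_def successively_conv_nth dimA by simp
qed

lemma adj_sym: "x < n \<Longrightarrow> y < n \<Longrightarrow> adj A x y \<longleftrightarrow> adj A y x"
  using symm unfolding adj_def by auto

lemma succ_take: "successively P xs \<Longrightarrow> successively P (take k xs)"
  using successively_append_iff[of P "take k xs" "drop k xs"] by simp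

lemma succ_rev_adj:
  assumes "set p \<subseteq> {..<n}" "successively (adj A) p"
  shows "successively (adj A) (rev p)"
  unfolding successively_rev
  by (rule successively_mono[OF assms(2)]) (use assms(1) adj_sym in blast)

lemma path_rev: "is_path A p \<Longrightarrow> is_path A (rev p)"
  unfolding is_path_alt using succ_rev_adj by auto

lemma path_tl: "is_path A (a # p) \<Longrightarrow> p \<noteq> [] \<Longrightarrow> is_path A p"
  unfolding is_path_alt by (auto simp: successively_Cons)

lemma path_take: "is_path A p \<Longrightarrow> k < length p \<Longrightarrow> is_path A (take (Suc k) p)"
  unfolding is_path_alt using succ_take set_take_subset distinct_take
  by (metis Zero_not_Suc le_less_trans length_0_conv linorder_not_less take_eq_Nil2 order_trans)

lemma path_snoc:
  assumes "is_path A p" "z < n" "z \<notin> set p" "adj A (last p) z"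
  shows "is_path A (p @ [z])"
  using assms unfolding is_path_alt by (auto simp: successively_append_iff)

lemma no_fork:
  assumes pa: "is_path A (a # p)" and qa: "is_path A (a # q)" and pne: "p \<noteq> []" and qne: "q \<noteq> []"
    and lst: "last p = last q" and hdd: "hd p \<noteq> hd q"
  shows False
proof -
  have ap: "a \<notin> set p" "distinct p" "set p \<subseteq> {..<n}" "a < n" "adj A a (hd p)" "successively (adj A) p"
    using pa pne unfolding is_path_alt by (auto simp: successively_Cons)
  have aq: "a \<notin> set q" "distinct q" "set q \<subseteq> {..<n}" "adj A a (hd q)" "successively (adj A) q"
    using qa qne unfolding is_path_alt by (auto simp: successively_Cons)
  have ex: "\<exists>i. i < length p \<and> p ! i \<in> set q"
  proof (intro exI conjI)
    show "length p - 1 < length p" using pne by simp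
    have "p ! (length p - 1) = last q" using lst last_conv_nth[OF pne] by simp
    then show "p ! (length p - 1) \<in> set q" using last_in_set[OF qne] by simp
  qed
  define i where "i = (LEAST i. i < length p \<and> p ! i \<in> set q)"
  have i: "i < length p" "p ! i \<in> set q" using LeastI_ex[OF ex] unfolding i_def by auto
  have imin: "p ! i' \<notin> set q" if "i' < i" for i'
    using not_less_Least[of i' "\<lambda>i. i < length p \<and> p ! i \<in> set q"] that i(1) unfolding i_def by auto
  obtain j where j: "j < length q" "q ! j = p ! i" using i(2) by (auto simp: in_set_conv_nth)
  define X where "X = take (Suc i) p"
  define Y where "Y = take j q"
  define C where "C = a # (X @ rev Y)"
  have Xeq: "X = take i p @ [p ! i]" unfolding X_def using i(1) by (simp add: take_Suc_conv_app_nth)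
  have Xne: "X \<noteq> []" and lastX: "last X = p ! i" using Xeq by auto
  have hdX: "hd X = hd p" unfolding X_def by simp
  have sX: "set X \<subseteq> set p" unfolding X_def by (rule set_take_subset)
  have sY: "set Y \<subseteq> set q" unfolding Y_def by (rule set_take_subset)
  have succX: "successively (adj A) X" unfolding X_def using succ_take[OF ap(6)] .
  have succY: "successively (adj A) (rev Y)"
    using succ_rev_adj[OF _ succ_take[OF aq(5)]] sY aq(3) unfolding Y_def by blast
  have disj: "set X \<inter> set Y = {}"
  proof (rule ccontr)
    assume "set X \<inter> set Y \<noteq> {}"
    then obtain y where y: "y \<in> set X" "y \<in> set Y" by blast
    from y(1) obtain i' where i': "i' < Suc i" "y = p ! i'"
      unfolding X_def using i(1) by (auto simp: in_set_conv_nth)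
    have "y \<in> set q" using y(2) sY by blast
    then have "i' = i" using imin i' by (cases "i' < i") auto
    then have yq: "y = q ! j" using i' j by simp
    from y(2) obtain j' where j': "j' < j" "y = q ! j'" unfolding Y_def using j(1)
      by (auto simp: in_set_conv_nth)
    have "q ! j' = q ! j" using yq j' by simp
    then have "j' = j" using nth_eq_iff_index_eq[OF aq(2)] j(1) j'(1) by simp
    then show False using j'(1) by simp
  qed
  have junction: "Y = [] \<or> adj A (last X) (hd (rev Y))"
  proof (cases "j = 0")
    case True then show ?thesis unfolding Y_def by simp
  next
    case False
    then have Yeq: "Y = take (j - 1) q @ [q ! (j - 1)]" unfolding Y_def using j(1)
      by (metis Suc_pred' bot_nat_0.not_eq_extremum less_imp_diff_less take_Suc_conv_app_nth)
    have a1: "adj A (q ! (j - 1)) (q ! j)" using successively_nth[OF aq(5), of "j - 1"] j(1) False by simp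
    have "q ! (j - 1) \<in> set q" "q ! j \<in> set q" using j(1) by (simp_all add: nth_mem)
    then have "q ! (j - 1) < n" "q ! j < n" using aq(3) by auto
    with a1 have "adj A (q ! j) (q ! (j - 1))" using adj_sym by blast
    then show ?thesis using Yeq lastX j(2) by simp
  qed
  have "is_path A C"
    unfolding is_path_alt C_def
  proof (intro conjI)
    show "a # X @ rev Y \<noteq> []" by simp
    show "distinct (a # X @ rev Y)"
      using ap(1) aq(1) sX sY disj distinct_take[OF ap(2)] distinct_take[OF aq(2)]
      unfolding X_def Y_def by auto
    show "set (a # X @ rev Y) \<subseteq> {..<n}" using ap(3,4) aq(3) sX sY by auto
    show "successively (adj A) (a # X @ rev Y)"
      using succX succY junction Xne hdX ap(5) by (auto simp: successively_Cons successively_append_iff)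
  qed
  moreover have "3 \<le> length C"
  proof -
    have "i \<noteq> 0 \<or> j \<noteq> 0"
    proof (rule ccontr)
      assume "\<not> (i \<noteq> 0 \<or> j \<noteq> 0)"
      then have "p ! 0 = q ! 0" using j by simp
      then show False using hdd pne qne by (simp add: hd_conv_nth)
    qed
    then show ?thesis unfolding C_def X_def Y_def using i(1) j(1) by auto
  qed
  moreover have "adj A (last C) (hd C)"
  proof -
    have "last C = hd q"
    proof (cases "j = 0")
      case True
      then show ?thesis unfolding C_def Y_def using lastX j(2) Xne qne by (simp add: hd_conv_nth)
    next
      case False
      then have "Y \<noteq> []" unfolding Y_def using qne by simp
      then show ?thesis unfolding C_def using False by (simp add: last_rev Y_def)
    qed
    moreover have "hd q < n" using hd_in_set[OF qne] aq(3) by blast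
    ultimately show ?thesis unfolding C_def using aq(4) ap(4) adj_sym by simp
  qed
  ultimately show False using acyc unfolding acyclic_mat_def by blast
qed

lemma path_unique:
  "is_path A p \<Longrightarrow> is_path A q \<Longrightarrow> hd p = hd q \<Longrightarrow> last p = last q \<Longrightarrow> p = q"
proof (induction p arbitrary: q)
  case Nil
  then show ?case by (simp add: is_path_def)
next
  case (Cons a p q)
  obtain b q' where q: "q = b # q'" using Cons.prems(2) unfolding is_path_def by (cases q) auto
  have b: "b = a" using Cons.prems(3) q by simp
  have dp: "a \<notin> set p" using Cons.prems(1) unfolding is_path_def by simp
  have dq: "a \<notin> set q'" using Cons.prems(2) q b unfolding is_path_def by simp
  show ?case
  proof (cases "p = []")
    case True
    then have "last q = a" using Cons.prems(4) by simp
    then have "q' = []" using dq q b by (cases "q' = []") auto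
    then show ?thesis using True q b by simp
  next
    case pne: False
    have qne: "q' \<noteq> []"
    proof
      assume "q' = []"
      then have "last p = a" using Cons.prems(4) q b pne by simp
      then show False using dp pne by (metis last_in_set)
    qed
    have pp: "is_path A p" using path_tl[OF Cons.prems(1) pne] .
    have pq: "is_path A q'" using path_tl[of b q'] Cons.prems(2) q qne by simp
    have ll: "last p = last q'" using Cons.prems(4) q pne qne by simp
    show ?thesis
    proof (cases "hd p = hd q'")
      case True
      have "p = q'" by (rule Cons.IH[OF pp pq True ll])
      then show ?thesis using q b by simp
    next
      case False
      have "is_path A (a # q')" using Cons.prems(2) q b by simp
      then show ?thesis using no_fork[OF Cons.prems(1) _ pne qne ll False] by blast
    qed
  qed
qed

lemma upath_eq: "is_path A p \<Longrightarrow> upath A (hd p) (last p) = p"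
  unfolding upath_def by (rule the_equality) (use path_unique in auto)

lemma has_path_upath:
  assumes "has_path A r v"
  shows "is_path A (upath A r v)" "hd (upath A r v) = r" "last (upath A r v) = v"
proof -
  obtain p where p: "is_path A p" "hd p = r" "last p = v" using assms unfolding has_path_def by blast
  then have "upath A r v = p" using upath_eq by blast
  then show "is_path A (upath A r v)" "hd (upath A r v) = r" "last (upath A r v) = v" using p by auto
qed

lemma has_path_lt: "has_path A r v \<Longrightarrow> r < n \<and> v < n"
  unfolding has_path_def is_path_alt by (metis hd_in_set last_in_set lessThan_iff subsetD)

lemma path_single: "r < n \<Longrightarrow> is_path A [r]"
  unfolding is_path_alt by simp

lemma upath_self: "r < n \<Longrightarrow> has_path A r r \<and> upath A r r = [r]"
  using path_single upath_eq[of "[r]"] unfolding has_path_def by force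

lemma has_path_sym:
  assumes "has_path A r v"
  shows "has_path A v r" "upath A v r = rev (upath A r v)"
proof -
  let ?P = "upath A r v"
  have P: "is_path A ?P" "hd ?P = r" "last ?P = v" using has_path_upath[OF assms] by auto
  have R: "is_path A (rev ?P)" using path_rev[OF P(1)] .
  have ne: "?P \<noteq> []" using P(1) unfolding is_path_def by simp
  have "hd (rev ?P) = v" "last (rev ?P) = r" using P ne by (auto simp: hd_rev last_rev)
  then show "has_path A v r" "upath A v r = rev ?P" using R upath_eq[OF R] unfolding has_path_def by auto
qed

lemma path_weight_rev:
  assumes "is_path A p"
  shows "path_weight A (rev p) = path_weight A p"
proof -
  define m where "m = length p - 1"
  have sp: "set p \<subseteq> {..<n}" using assms unfolding is_path_alt by simp
  have ne: "p \<noteq> []" using assms unfolding is_path_alt by simp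
  have "path_weight A (rev p) = (\<Prod>i<m. A $$ (p ! (m - Suc i), p ! Suc (m - Suc i)))"
    unfolding path_weight_def m_def
  proof (rule prod.cong)
    show "{..<length (rev p) - 1} = {..<length p - 1}" by simp
    fix i assume i: "i \<in> {..<length p - 1}"
    then have il: "i < length p - 1" by simp
    have e1: "rev p ! i = p ! Suc (length p - 1 - Suc i)" using il by (simp add: rev_nth Suc_diff_Suc)
    have e2: "rev p ! Suc i = p ! (length p - 1 - Suc i)" using il by (simp add: rev_nth)
    have k1: "Suc (length p - 1 - Suc i) < length p" "length p - 1 - Suc i < length p" using il by auto
    have "p ! Suc (length p - 1 - Suc i) \<in> set p" "p ! (length p - 1 - Suc i) \<in> set p"
      using nth_mem[OF k1(1)] nth_mem[OF k1(2)] .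
    then have "p ! Suc (length p - 1 - Suc i) < n" "p ! (length p - 1 - Suc i) < n"
      using sp by auto
    then show "A $$ (rev p ! i, rev p ! Suc i) = A $$ (p ! (length p - 1 - Suc i), p ! Suc (length p - 1 - Suc i))"
      using e1 e2 symm by simp
  qed
  also have "\<dots> = (\<Prod>i<m. A $$ (p ! i, p ! Suc i))"
    by (rule prod.nat_diff_reindex)
  finally show ?thesis unfolding path_weight_def m_def .
qed

end



context forest begin

definition Phi :: "real \<Rightarrow> nat set \<Rightarrow> real" where
  "Phi x T = detS (N x) ({0..<n} - T)"

definition gv :: "real \<Rightarrow> nat \<Rightarrow> nat \<Rightarrow> real" where
  "gv x r v = (if has_path A r v then path_weight A (upath A r v) * Phi x (set (upath A r v)) else 0)"

lemma path_weight_snoc: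
  assumes "P \<noteq> []"
  shows "path_weight A (P @ [w]) = path_weight A P * A $$ (last P, w)"
proof -
  define m where "m = length P - 1"
  have lm: "length P = Suc m" using assms unfolding m_def by simp
  have "path_weight A (P @ [w]) = (\<Prod>i<Suc m. A $$ ((P @ [w]) ! i, (P @ [w]) ! Suc i))"
    unfolding path_weight_def using lm by simp
  also have "\<dots> = (\<Prod>i<m. A $$ ((P @ [w]) ! i, (P @ [w]) ! Suc i)) * A $$ ((P @ [w]) ! m, (P @ [w]) ! Suc m)"
    by (rule prod.lessThan_Suc)
  also have "(\<Prod>i<m. A $$ ((P @ [w]) ! i, (P @ [w]) ! Suc i)) = path_weight A P"
    unfolding path_weight_def m_def[symmetric]
  proof (rule prod.cong[OF refl])
    fix i assume "i \<in> {..<m}"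
    then have "i < length P" "Suc i < length P" using lm by auto
    then show "A $$ ((P @ [w]) ! i, (P @ [w]) ! Suc i) = A $$ (P ! i, P ! Suc i)" by (simp add: nth_append)
  qed
  also have "(P @ [w]) ! m = last P" using lm assms by (simp add: nth_append last_conv_nth)
  also have "(P @ [w]) ! Suc m = w" using lm by (simp add: nth_append)
  finally show ?thesis .
qed

lemma path_ext:
  assumes hp: "has_path A r w" and z: "z < n" "adj A w z" "z \<notin> set (upath A r w)"
  shows "has_path A r z" "upath A r z = upath A r w @ [z]"
proof -
  let ?P = "upath A r w"
  have P: "is_path A ?P" "hd ?P = r" "last ?P = w" using has_path_upath[OF hp] by auto
  have ne: "?P \<noteq> []" using P(1) unfolding is_path_def by simp
  have Q: "is_path A (?P @ [z])" using path_snoc[OF P(1) z(1) z(3)] P(3) z(2) by simp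
  have "hd (?P @ [z]) = r" "last (?P @ [z]) = z" using P ne by auto
  then show "has_path A r z" "upath A r z = ?P @ [z]" using Q upath_eq[OF Q] unfolding has_path_def by auto
qed

lemma has_path_adj:
  assumes hp: "has_path A r z" and a: "adj A z w" and w: "w < n"
  shows "has_path A r w"
proof (cases "w \<in> set (upath A r z)")
  case True
  let ?P = "upath A r z"
  have P: "is_path A ?P" "hd ?P = r" "last ?P = z" using has_path_upath[OF hp] by auto
  obtain j where j: "j < length ?P" "?P ! j = w" using True by (auto simp: in_set_conv_nth)
  have Q: "is_path A (take (Suc j) ?P)" using path_take[OF P(1) j(1)] .
  have "take (Suc j) ?P = take j ?P @ [w]" using j by (simp add: take_Suc_conv_app_nth)
  then have "last (take (Suc j) ?P) = w" by simp
  moreover have "hd (take (Suc j) ?P) = r" using P(2) by simp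
  ultimately show ?thesis using Q unfolding has_path_def by blast
next
  case False
  then show ?thesis using path_ext(1)[OF hp w a] by blast
qed

lemma pred_struct:
  assumes hp: "has_path A r w" and ne: "w \<noteq> r"
  obtains P' where "upath A r w = P' @ [w]" "P' \<noteq> []" "has_path A r (last P')"
    "upath A r (last P') = P'" "adj A (last P') w"
    "\<And>z. z \<in> set (upath A r w) \<Longrightarrow> z \<noteq> w \<Longrightarrow> adj A w z \<Longrightarrow> z = last P'"
proof -
  let ?P = "upath A r w"
  have P: "is_path A ?P" "hd ?P = r" "last ?P = w" using has_path_upath[OF hp] by auto
  have Pne: "?P \<noteq> []" using P(1) unfolding is_path_def by simp
  have wlt: "w < n" using has_path_lt[OF hp] by simp
  define P' where "P' = butlast ?P"
  have Peq: "?P = P' @ [w]" unfolding P'_def using append_butlast_last_id[OF Pne] P(3) by simp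
  have P'ne: "P' \<noteq> []"
  proof
    assume "P' = []"
    then have "?P = [w]" using Peq by simp
    then show False using P(2) ne by simp
  qed
  have lenP: "length ?P = Suc (length P')" using Peq by simp
  have pP': "is_path A P'"
  proof -
    have "P' = take (Suc (length P' - 1)) ?P" using Peq P'ne by simp
    moreover have "length P' - 1 < length ?P" using lenP by simp
    ultimately show ?thesis using path_take[OF P(1)] by metis
  qed
  have hdP': "hd P' = r" using P(2) Peq P'ne by simp
  have up: "upath A r (last P') = P'" using upath_eq[OF pP'] hdP' by simp
  have hp': "has_path A r (last P')" using pP' hdP' unfolding has_path_def by blast
  have adjw: "adj A (last P') w" using P(1) Peq P'ne unfolding is_path_alt by (simp add: successively_append_iff)
  have distP: "distinct (P' @ [w])" using P(1) Peq unfolding is_path_def by simp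
  have setP: "set (P' @ [w]) \<subseteq> {..<n}" using P(1) Peq unfolding is_path_alt by simp
  have last_cl: "z = last P'" if z: "z \<in> set ?P" "z \<noteq> w" "adj A w z" for z
  proof (rule ccontr)
    assume nl: "z \<noteq> last P'"
    have "z \<in> set P'" using z Peq by simp
    then obtain j where j: "j < length P'" "P' ! j = z" by (auto simp: in_set_conv_nth)
    have jl: "j < length P' - 1"
    proof (rule ccontr)
      assume "\<not> j < length P' - 1"
      then have "j = length P' - 1" using j(1) by simp
      then have "z = last P'" using j(2) P'ne by (simp add: last_conv_nth)
      then show False using nl by simp
    qed
    let ?Q = "take (Suc j) P' @ [w]"
    have T: "is_path A (take (Suc j) P')" using path_take[OF pP' j(1)] .
    have tl: "take (Suc j) P' = take j P' @ [z]" using j by (simp add: take_Suc_conv_app_nth)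
    have "w \<notin> set P'" using distP by simp
    then have wn: "w \<notin> set (take (Suc j) P')" using set_take_subset by fastforce
    have zlt: "z < n" using setP \<open>z \<in> set P'\<close> by auto
    have "adj A z w" using z(3) adj_sym[OF zlt wlt] by simp
    then have "adj A (last (take (Suc j) P')) w" using tl by simp
    then have Q: "is_path A ?Q" using path_snoc[OF T wlt wn] by simp
    have tne: "take (Suc j) P' \<noteq> []" using P'ne by simp
    have "hd ?Q = hd (take (Suc j) P')" using hd_append2[OF tne] by blast
    also have "\<dots> = hd P'" by (rule hd_take) simp
    finally have "hd ?Q = r" using hdP' by simp
    moreover have "last ?Q = w" by simp
    ultimately have "upath A r w = ?Q" using upath_eq[OF Q] by simp
    then have "length ?P = length ?Q" by simp
    then show False using jl j(1) lenP by simp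
  qed
  show ?thesis using that[OF Peq P'ne hp' up adjw last_cl] .
qed

lemma sum_N:
  assumes w: "w < n"
  shows "(\<Sum>z\<in>{0..<n}. N x w z * f z) = x * f w - (\<Sum>z\<in>{0..<n}. A $$ (w,z) * f z)"
proof -
  have "(\<Sum>z\<in>{0..<n}. N x w z * f z) = (\<Sum>z\<in>{0..<n}. (if w = z then x * f z else 0) - A $$ (w,z) * f z)"
    unfolding N_def by (rule sum.cong) (auto simp: left_diff_distrib)
  also have "\<dots> = (\<Sum>z\<in>{0..<n}. (if w = z then x * f z else 0)) - (\<Sum>z\<in>{0..<n}. A $$ (w,z) * f z)"
    by (rule sum_subtractf)
  also have "(\<Sum>z\<in>{0..<n}. (if w = z then x * f z else 0)) = x * f w"
    using w by (simp add: sum.delta)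
  finally show ?thesis .
qed

end



context forest begin

lemma gv_self: "r < n \<Longrightarrow> gv x r r = Phi x {r}"
  using upath_self[of r] unfolding gv_def path_weight_def by simp

lemma kernel:
  assumes r: "r < n" and w: "w < n" and root: "Phi x {} = 0"
  shows "(\<Sum>z\<in>{0..<n}. N x w z * gv x r z) = 0"
proof -
  let ?V = "{0..<n}"
  let ?f = "\<lambda>z. A $$ (w,z) * gv x r z"
  have finV: "finite ?V" by simp
  have "x * gv x r w - sum ?f ?V = 0"
  proof (cases "has_path A r w")
    case False
    have gw: "gv x r w = 0" using False unfolding gv_def by simp
    have fz: "?f z = 0" if z: "z \<in> ?V" for z
    proof (cases "A $$ (w,z) = 0")
      case nz: False
      show ?thesis
      proof (cases "z = w")
        case True then show ?thesis using gw by simp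
      next
        case zw: False
        have "adj A w z" using nz zw unfolding adj_def by auto
        then have "adj A z w" using adj_sym[of w z] z w by simp
        then have "\<not> has_path A r z" using has_path_adj[of r z w] w False by blast
        then show ?thesis unfolding gv_def by simp
      qed
    qed simp
    have "sum ?f ?V = 0" by (rule sum.neutral) (use fz in blast)
    then show ?thesis using gw by simp
  next
    case hpw: True
    show ?thesis
    proof (cases "w = r")
      case True
      have gr: "gv x r r = Phi x {r}" using gv_self[OF r] .
      have trm: "?f z = A $$ (r,z) * A $$ (z,r) * detS (N x) (?V - {r} - {z})" if z: "z \<in> ?V - {r}" for z
      proof (cases "A $$ (r,z) = 0")
        case nz: False
        have adjz: "adj A r z" using nz z unfolding adj_def by auto
        have ur: "upath A r r = [r]" "has_path A r r" using upath_self[OF r] by auto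
        have zl: "z < n" using z by simp
        have "z \<notin> set (upath A r r)" using ur z by simp
        then have hz: "has_path A r z" "upath A r z = [r, z]"
          using path_ext[OF ur(2) zl adjz] ur by auto
        have pw: "path_weight A [r, z] = A $$ (r,z)" unfolding path_weight_def by simp
        have st: "?V - set [r, z] = ?V - {r} - {z}" by auto
        have gz: "gv x r z = A $$ (r,z) * detS (N x) (?V - {r} - {z})"
          unfolding gv_def Phi_def using hz pw st by simp
        have "A $$ (z,r) = A $$ (r,z)" using symm r zl by simp
        then show ?thesis using gz True by simp
      qed (use True in simp)
      have "sum ?f ?V = ?f r + sum ?f (?V - {r})" by (rule sum.remove) (use r in auto)
      also have "sum ?f (?V - {r}) = (\<Sum>z\<in>?V - {r}. A $$ (r,z) * A $$ (z,r) * detS (N x) (?V - {r} - {z}))"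
        by (rule sum.cong[OF refl]) (rule trm)
      finally have sf: "sum ?f ?V = A $$ (r,r) * Phi x {r} + (\<Sum>z\<in>?V - {r}. A $$ (r,z) * A $$ (z,r) * detS (N x) (?V - {r} - {z}))"
        using True gr by simp
      have sch: "detS (N x) ?V = (x - A $$ (r,r)) * detS (N x) (?V - {r})
          - (\<Sum>z\<in>?V - {r}. A $$ (r,z) * A $$ (z,r) * detS (N x) (?V - {r} - {z}))"
        using schwenk[of ?V r x] r by simp
      have "detS (N x) ?V = 0" using root unfolding Phi_def by simp
      then show ?thesis using sf sch gr True unfolding Phi_def by (simp add: algebra_simps)
    next
      case wr: False
      obtain P' where P': "upath A r w = P' @ [w]" "P' \<noteq> []" "has_path A r (last P')"
        "upath A r (last P') = P'" "adj A (last P') w"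
        and cl: "\<And>z. z \<in> set (upath A r w) \<Longrightarrow> z \<noteq> w \<Longrightarrow> adj A w z \<Longrightarrow> z = last P'"
        using pred_struct[OF hpw wr] by blast
      define p where "p = last P'"
      define P where "P = upath A r w"
      define W' where "W' = path_weight A P'"
      define S where "S = ?V - set P'"
      have Peq: "P = P' @ [w]" using P'(1) unfolding P_def .
      have pathP: "is_path A P" using has_path_upath[OF hpw] unfolding P_def by simp
      have distP: "distinct (P' @ [w])" using pathP Peq unfolding is_path_def by simp
      have wP': "w \<notin> set P'" using distP by simp
      have plt: "p < n" using has_path_lt[OF P'(3)] unfolding p_def by simp
      have pw: "p \<noteq> w" using P'(5) unfolding p_def adj_def by simp
      have pP': "p \<in> set P'" unfolding p_def using P'(2) by simp
      have setP: "set P \<subseteq> ?V" using pathP unfolding is_path_alt by auto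
      have wS: "w \<in> S" unfolding S_def using wP' w by simp
      have SV: "S \<subseteq> ?V" unfolding S_def by auto
      have WP: "path_weight A P = W' * A $$ (p, w)"
        unfolding Peq W'_def p_def using path_weight_snoc[OF P'(2)] .
      have gw: "gv x r w = W' * A $$ (p, w) * detS (N x) (S - {w})"
      proof -
        have "?V - set P = S - {w}" unfolding S_def Peq by auto
        then show ?thesis unfolding gv_def Phi_def using hpw WP P_def by simp
      qed
      have gp: "gv x r p = W' * detS (N x) S"
        unfolding gv_def Phi_def S_def W'_def p_def using P'(3,4) by simp
      have outside: "?f z = W' * A $$ (p, w) * (A $$ (w,z) * A $$ (z,w) * detS (N x) (S - {w} - {z}))"
        if z: "z \<in> S - {w}" for z
      proof (cases "A $$ (w,z) = 0")
        case nz: False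
        have zl: "z < n" using z SV by auto
        have zw: "z \<noteq> w" using z by simp
        have adjz: "adj A w z" using nz zw unfolding adj_def by auto
        have znP: "z \<notin> set (upath A r w)" using z unfolding S_def P'(1) by auto
        have hz: "has_path A r z" "upath A r z = P @ [z]"
          using path_ext[OF hpw zl adjz znP] unfolding P_def by auto
        have Pne: "P \<noteq> []" using Peq by simp
        have lastP: "last P = w" using Peq by simp
        have "path_weight A (P @ [z]) = path_weight A P * A $$ (w, z)"
          using path_weight_snoc[OF Pne] lastP by simp
        moreover have "?V - set (P @ [z]) = S - {w} - {z}" unfolding S_def Peq by auto
        ultimately have gz: "gv x r z = W' * A $$ (p, w) * A $$ (w, z) * detS (N x) (S - {w} - {z})"
          unfolding gv_def Phi_def using hz WP by simp
        have "A $$ (z,w) = A $$ (w,z)" using symm w zl by simp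
        then show ?thesis using gz by (simp add: algebra_simps)
      qed simp
      have inside: "?f z = 0" if z: "z \<in> set P - {w} - {p}" for z
      proof (rule ccontr)
        assume "?f z \<noteq> 0"
        then have "A $$ (w,z) \<noteq> 0" by auto
        moreover have "z \<noteq> w" using z by simp
        ultimately have "adj A w z" unfolding adj_def by auto
        then have "z = p" using cl[of z] z unfolding P_def p_def by auto
        then show False using z by simp
      qed
      have VT: "?V - set P = S - {w}" unfolding S_def Peq by auto
      have "sum ?f ?V = sum ?f (?V - set P) + sum ?f (set P)"
        by (rule sum.subset_diff[OF setP finV])
      also have "sum ?f (set P) = ?f w + sum ?f (set P - {w})"
        by (rule sum.remove) (auto simp: Peq)
      also have "sum ?f (set P - {w}) = ?f p + sum ?f (set P - {w} - {p})"
        by (rule sum.remove) (use pP' pw in \<open>auto simp: Peq\<close>)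
      also have "sum ?f (set P - {w} - {p}) = 0" by (rule sum.neutral) (use inside in blast)
      also have "sum ?f (?V - set P) = W' * A $$ (p, w) * (\<Sum>z\<in>S - {w}. A $$ (w,z) * A $$ (z,w) * detS (N x) (S - {w} - {z}))"
        unfolding VT sum_distrib_left by (rule sum.cong[OF refl]) (rule outside)
      finally have sf: "sum ?f ?V = W' * A $$ (p, w) * (\<Sum>z\<in>S - {w}. A $$ (w,z) * A $$ (z,w) * detS (N x) (S - {w} - {z}))
          + (A $$ (w,w) * gv x r w + A $$ (w,p) * gv x r p)" by simp
      have sch: "detS (N x) S = (x - A $$ (w,w)) * detS (N x) (S - {w})
          - (\<Sum>z\<in>S - {w}. A $$ (w,z) * A $$ (z,w) * detS (N x) (S - {w} - {z}))"
        using schwenk[OF SV wS] .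
      have sy: "A $$ (w,p) = A $$ (p,w)" using symm w plt by simp
      show ?thesis using sf sch gw gp sy by (simp add: algebra_simps)
    qed
  qed
  then show ?thesis using sum_N[OF w, of x "gv x r"] by simp
qed

end



context forest begin

lemma N_eq: "N x = (\<lambda>i j. (if i = j then x else 0) - A $$ (i,j))"
  by (intro ext) (simp add: N_def)

lemma phi_Phi: "finite U \<Longrightarrow> phi (del_mat A U) x = Phi x U"
  unfolding Phi_def N_eq using phi_detS[OF carr] by simp

lemma char_poly_Phi: "poly (char_poly A) x = Phi x {}"
proof -
  have "char_poly A = detS (\<lambda>i j. (if i = j then [:0,1:] else 0) + [: - A $$ (i,j) :]) ({0..<n})"
    unfolding char_poly_def
  proof (rule det_via_detS[where h = id])
    show "char_poly_matrix A \<in> carrier_mat n n" using carr by simp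
    show "bij_betw id {0..<n} {0..<n}" by simp
    fix a b assume ab: "a < n" "b < n"
    show "char_poly_matrix A $$ (a, b) = (if id a = id b then [:0, 1:] else 0) + [:- A $$ (id a, id b):]"
      using ab carr by (auto simp: char_poly_matrix_def)
  qed
  then have "poly (char_poly A) x = detS (\<lambda>i j. poly ((if i = j then [:0,1:] else 0) + [: - A $$ (i,j) :]) x) {0..<n}"
    by (simp add: poly_detS)
  also have "\<dots> = detS (N x) {0..<n}" unfolding N_eq by (rule detS_cong) auto
  finally show ?thesis unfolding Phi_def by simp
qed

lemma phi'_Phi: "phi' A x = (\<Sum>v<n. Phi x {v})"
proof -
  have "phi' A x = (\<Sum>i<n. poly (char_poly (mat_delete A i i)) x)"
    unfolding phi'_def pderiv_char_poly[OF carr] by (simp add: poly_sum)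
  also have "\<dots> = (\<Sum>v<n. Phi x {v})"
    by (rule sum.cong[OF refl]) (simp add: phi_delete[OF carr] Phi_def N_eq)
  finally show ?thesis .
qed

lemma gv_sym:
  assumes "r < n" "v < n"
  shows "gv x r v = gv x v r"
proof (cases "has_path A r v")
  case True
  have s: "has_path A v r" "upath A v r = rev (upath A r v)" using has_path_sym[OF True] by auto
  have "path_weight A (upath A v r) = path_weight A (upath A r v)"
    using s(2) path_weight_rev has_path_upath[OF True] by simp
  then show ?thesis unfolding gv_def using True s by simp
next
  case False
  have "\<not> has_path A v r" using False has_path_sym by blast
  then show ?thesis unfolding gv_def using False by simp
qed

lemma dim_one:
  assumes u: "u < n" and nzu: "Phi x {u} \<noteq> 0"
    and ker: "\<And>w. w < n \<Longrightarrow> (\<Sum>z\<in>{0..<n}. N x w z * y z) = 0" and yu: "y u = 0"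
  shows "\<And>z. z < n \<Longrightarrow> y z = 0"
proof -
  define G where "G = (\<lambda>i j. if j = u then (if i = u then 1 else 0) else N x i j)"
  define M where "M = mat n n (\<lambda>(i,j). G i j)"
  have Mc: "M \<in> carrier_mat n n" unfolding M_def by simp
  have "det M = detS G {0..<n}"
    by (rule det_via_detS[OF Mc, where h = id]) (auto simp: M_def)
  also have "\<dots> = G u u * detS G ({0..<n} - {u})"
    by (rule detS_col) (use u in \<open>auto simp: G_def\<close>)
  also have "detS G ({0..<n} - {u}) = detS (N x) ({0..<n} - {u})"
    by (rule detS_cong) (auto simp: G_def)
  finally have "det M = Phi x {u}" unfolding Phi_def G_def by simp
  then have dM: "det M \<noteq> 0" using nzu by simp
  have "M *\<^sub>v vec n y = 0\<^sub>v n"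
  proof (rule eq_vecI)
    fix i assume i: "i < dim_vec (0\<^sub>v n :: real vec)"
    then have il: "i < n" by simp
    have "(M *\<^sub>v vec n y) $ i = (\<Sum>j\<in>{0..<n}. G i j * y j)"
      using il unfolding M_def by (simp add: mult_mat_vec_def scalar_prod_def row_def)
    also have "\<dots> = (\<Sum>j\<in>{0..<n}. N x i j * y j)"
      by (rule sum.cong[OF refl]) (auto simp: G_def yu)
    also have "\<dots> = 0" using ker[OF il] .
    finally show "(M *\<^sub>v vec n y) $ i = (0\<^sub>v n :: real vec) $ i" using il by simp
  qed (simp add: M_def)
  moreover have cv: "vec n y \<in> carrier_vec n" by simp
  ultimately have "vec n y = 0\<^sub>v n" using det_0_iff_vec_prod_zero[OF Mc] dM by blast
  then show "\<And>z. z < n \<Longrightarrow> y z = 0" by (metis index_vec index_zero_vec(1))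
qed

end



context forest begin

lemma eig_scaled:
  assumes ker: "\<And>w. w < n \<Longrightarrow> (\<Sum>z\<in>{0..<n}. N x w z * f z) = 0"
    and u: "u < n" and fu: "f u \<noteq> 0" and c: "c \<noteq> 0"
  shows "eigenvector A (vec n (\<lambda>v. c * f v)) x"
proof -
  let ?b = "vec n (\<lambda>v. c * f v)"
  have ne: "?b \<noteq> 0\<^sub>v n"
  proof
    assume "?b = 0\<^sub>v n"
    then have "?b $ u = 0" using u by simp
    then show False using u fu c by simp
  qed
  have "A *\<^sub>v ?b = x \<cdot>\<^sub>v ?b"
  proof (rule eq_vecI)
    show "dim_vec (A *\<^sub>v ?b) = dim_vec (x \<cdot>\<^sub>v ?b)" using dimA by simp
    fix i assume "i < dim_vec (x \<cdot>\<^sub>v ?b)"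
    then have i: "i < n" by simp
    have "(A *\<^sub>v ?b) $ i = (\<Sum>j\<in>{0..<n}. A $$ (i,j) * (c * f j))"
      using i dimA by (simp add: mult_mat_vec_def scalar_prod_def row_def)
    also have "\<dots> = c * (\<Sum>j\<in>{0..<n}. A $$ (i,j) * f j)"
      by (simp add: sum_distrib_left algebra_simps)
    also have "(\<Sum>j\<in>{0..<n}. A $$ (i,j) * f j) = x * f i"
      using sum_N[OF i, of x f] ker[OF i] by simp
    finally show "(A *\<^sub>v ?b) $ i = (x \<cdot>\<^sub>v ?b) $ i" using i by simp
  qed
  then show ?thesis unfolding eigenvector_def using ne dimA by simp
qed

lemma main:
  assumes u: "u < n" and root: "Phi lam {} = 0" and nzu: "Phi lam {u} \<noteq> 0"
  shows "\<exists>\<beta> \<gamma>. eigenvector A \<beta> lam \<and> \<beta> \<bullet> \<beta> = 1 \<and> eigenvector A \<gamma> lam \<and>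
      (\<forall>v<n. \<beta> $ v = gv lam u v / sqrt (Phi lam {u} * (\<Sum>v<n. Phi lam {v}))) \<and>
      (\<forall>v<n. \<bar>\<gamma> $ v\<bar> = sqrt \<bar>Phi lam {v}\<bar>)"
proof -
  define f where "f = gv lam u"
  have ker: "(\<Sum>z\<in>{0..<n}. N lam w z * gv lam r z) = 0" if "r < n" "w < n" for r w
    using kernel[OF that root] .
  have kf: "\<And>w. w < n \<Longrightarrow> (\<Sum>z\<in>{0..<n}. N lam w z * f z) = 0" using ker[OF u] f_def by simp
  have fu: "f u = Phi lam {u}" using gv_self[OF u] unfolding f_def .
  have fu0: "f u \<noteq> 0" using fu nzu by simp
  have sq: "f v * f v = f u * Phi lam {v}" if v: "v < n" for v
  proof -
    define h where "h = gv lam v"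
    define c where "c = h u / f u"
    define y where "y = (\<lambda>z. h z - c * f z)"
    have ky: "(\<Sum>z\<in>{0..<n}. N lam w z * y z) = 0" if w: "w < n" for w
    proof -
      have "(\<Sum>z\<in>{0..<n}. N lam w z * y z) = (\<Sum>z\<in>{0..<n}. N lam w z * h z) - c * (\<Sum>z\<in>{0..<n}. N lam w z * f z)"
        unfolding y_def by (simp add: sum_subtractf sum_distrib_left algebra_simps)
      also have "\<dots> = 0" using ker[OF v w] kf[OF w] unfolding h_def by simp
      finally show ?thesis .
    qed
    have "y u = 0" using fu0 unfolding y_def c_def by simp
    then have "y v = 0" using dim_one[OF u nzu ky] v by blast
    then have hv: "h v = c * f v" unfolding y_def by simp
    have "h v = Phi lam {v}" using gv_self[OF v] unfolding h_def .
    moreover have "h u = f v" using gv_sym[OF v u] unfolding h_def f_def .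
    ultimately have "Phi lam {v} = f v / f u * f v" using hv unfolding c_def by simp
    then show ?thesis using fu0 by (simp add: field_simps)
  qed
  define s where "s = (\<Sum>v<n. Phi lam {v})"
  have ss: "(\<Sum>v<n. f v * f v) = f u * s"
    unfolding s_def sum_distrib_left using sq by simp
  have "f u * f u \<le> (\<Sum>v<n. f v * f v)"
    by (rule member_le_sum[of u "{..<n}" "\<lambda>v. f v * f v"]) (use u in auto)
  moreover have "f u * f u > 0" using fu0 by (auto simp: zero_less_mult_iff linorder_neq_iff)
  ultimately have spos: "f u * s > 0" using ss by simp
  define t where "t = f u * s"
  have tpos: "t > 0" using spos t_def by simp
  define \<beta> where "\<beta> = vec n (\<lambda>v. (1 / sqrt t) * f v)"
  define \<gamma> where "\<gamma> = vec n (\<lambda>v. (1 / sqrt \<bar>f u\<bar>) * f v)"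
  have c1: "1 / sqrt t \<noteq> 0" using tpos by simp
  have e1: "eigenvector A \<beta> lam" unfolding \<beta>_def by (rule eig_scaled[OF kf u fu0 c1])
  have c2: "1 / sqrt \<bar>f u\<bar> \<noteq> 0" using fu0 by simp
  have e2: "eigenvector A \<gamma> lam" unfolding \<gamma>_def by (rule eig_scaled[OF kf u fu0 c2])
  have "\<beta> \<bullet> \<beta> = (\<Sum>i\<in>{0..<n}. (1 / sqrt t) * f i * ((1 / sqrt t) * f i))"
    unfolding \<beta>_def scalar_prod_def by (rule sum.cong) auto
  also have "\<dots> = (1 / t) * (\<Sum>i<n. f i * f i)"
  proof -
    have st: "sqrt t * sqrt t = t" using tpos by simp
    have "(1 / sqrt t) * (1 / sqrt t) = 1 / (sqrt t * sqrt t)" by simp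
    then have "(1 / sqrt t) * (1 / sqrt t) = 1 / t" using st by simp
    then show ?thesis by (simp add: sum_distrib_left atLeast0LessThan algebra_simps)
  qed
  also have "\<dots> = 1" using ss tpos unfolding t_def by (simp del: mult_eq_0_iff)
  finally have n1: "\<beta> \<bullet> \<beta> = 1" .
  have bv: "\<forall>v<n. \<beta> $ v = gv lam u v / sqrt (Phi lam {u} * (\<Sum>v<n. Phi lam {v}))"
    unfolding \<beta>_def t_def s_def fu[symmetric] f_def by simp
  have gv': "\<forall>v<n. \<bar>\<gamma> $ v\<bar> = sqrt \<bar>Phi lam {v}\<bar>"
  proof (intro allI impI)
    fix v assume v: "v < n"
    have "\<bar>f v\<bar> = sqrt (f v * f v)" by simp
    also have "f v * f v = \<bar>f u\<bar> * \<bar>Phi lam {v}\<bar>"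
    proof -
      have "f v * f v \<ge> 0" by simp
      then have "f v * f v = \<bar>f u * Phi lam {v}\<bar>" using sq[OF v] by simp
      then show ?thesis by (simp add: abs_mult)
    qed
    also have "sqrt (\<bar>f u\<bar> * \<bar>Phi lam {v}\<bar>) = sqrt \<bar>f u\<bar> * sqrt \<bar>Phi lam {v}\<bar>" by (rule real_sqrt_mult)
    finally have fv: "\<bar>f v\<bar> = sqrt \<bar>f u\<bar> * sqrt \<bar>Phi lam {v}\<bar>" .
    have pos: "sqrt \<bar>f u\<bar> > 0" using fu0 by simp
    have "\<bar>\<gamma> $ v\<bar> = \<bar>f v\<bar> / sqrt \<bar>f u\<bar>" unfolding \<gamma>_def using v pos by (simp add: abs_mult)
    then show "\<bar>\<gamma> $ v\<bar> = sqrt \<bar>Phi lam {v}\<bar>" using fv pos by simp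
  qed
  show ?thesis using e1 e2 n1 bv gv' by blast
qed

end

theorem theorem3p3:
  fixes A :: "real mat" and n u :: nat and lam :: real
  assumes "A \<in> carrier_mat n n"
    and "\<forall>i < n. \<forall>j < n. A $$ (i, j) = A $$ (j, i)"
    and "acyclic_mat A"
    and "order lam (char_poly A) = 1"
    and "u < n"
    and "phi (del_mat A {u}) lam \<noteq> 0"
  shows "\<exists>\<beta> \<gamma>. eigenvector A \<beta> lam \<and> \<beta> \<bullet> \<beta> = 1 \<and> eigenvector A \<gamma> lam \<and>
    (\<forall>v < n. \<beta> $ v =
       (if has_path A u v
        then path_weight A (upath A u v) * phi (del_mat A (set (upath A u v))) lam
             / sqrt (phi (del_mat A {u}) lam * phi' A lam)
        else 0)) \<and>
    (\<forall>v < n. \<bar>\<gamma> $ v\<bar> = sqrt \<bar>phi (del_mat A {v}) lam\<bar>)"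
proof -
  interpret F: forest A n using assms(1-3) by unfold_locales
  have "poly (char_poly A) lam = 0" using assms(4) order_root[of "char_poly A" lam] by simp
  then have root: "F.Phi lam {} = 0" using F.char_poly_Phi by simp
  have nzu: "F.Phi lam {u} \<noteq> 0" using assms(6) F.phi_Phi[of "{u}"] by simp
  obtain \<beta> \<gamma> where b: "eigenvector A \<beta> lam" "\<beta> \<bullet> \<beta> = 1" "eigenvector A \<gamma> lam"
    "\<forall>v<n. \<beta> $ v = F.gv lam u v / sqrt (F.Phi lam {u} * (\<Sum>v<n. F.Phi lam {v}))"
    "\<forall>v<n. \<bar>\<gamma> $ v\<bar> = sqrt \<bar>F.Phi lam {v}\<bar>"
    using F.main[OF assms(5) root nzu] by blast
  have d: "phi' A lam = (\<Sum>v<n. F.Phi lam {v})" using F.phi'_Phi .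
  have du: "phi (del_mat A {u}) lam = F.Phi lam {u}" using F.phi_Phi[of "{u}"] by simp
  have c1: "\<forall>v < n. \<beta> $ v =
       (if has_path A u v
        then path_weight A (upath A u v) * phi (del_mat A (set (upath A u v))) lam
             / sqrt (phi (del_mat A {u}) lam * phi' A lam)
        else 0)"
  proof (intro allI impI)
    fix v assume v: "v < n"
    show "\<beta> $ v = (if has_path A u v
        then path_weight A (upath A u v) * phi (del_mat A (set (upath A u v))) lam
             / sqrt (phi (del_mat A {u}) lam * phi' A lam)
        else 0)"
      using b(4) v unfolding d du F.gv_def by (simp add: F.phi_Phi)
  qed
  have c2: "\<forall>v < n. \<bar>\<gamma> $ v\<bar> = sqrt \<bar>phi (del_mat A {v}) lam\<bar>"
    using b(5) F.phi_Phi by simp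
  show ?thesis using b(1,2,3) c1 c2 by blast
qed



end
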